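(* Let $0<\delta<\frac12$, let $f\in\mathrm{Diff}_+^{1,\delta}(I)$ and let $G\subseteq\mathrm{Diff}_0^3(I)$. Then for every $C>0$ the set $A_C=\{\log(g'): g\in G,\ p_\delta(g\circ f)\le C\}$ has compact closure in the space $C(I)$ of continuous real functions on $I$ with the sup metric.
   Context: $I=[0,1]$. $\mathrm{Diff}_+^1(I)$ is the set of $C^1$ diffeomorphisms of $I$ fixing $0$ and $1$; $\mathrm{Diff}_+^{1,\delta}(I)$ is the set of $f\in\mathrm{Diff}_+^1(I)$ with $f'$ Hölder of exponent $\delta$. $\mathrm{Diff}_0^3(I)$ is the set of $C^3$ diffeomorphisms $f$ of $I$ fixing $0$ and $1$ with $f'(0)=f'(1)=1$. For $f\in\mathrm{Diff}_+^{1,\delta}(I)$, $p_\delta(f)=|\log(f'(0))|+\sup_{t_1\ne t_2\in I}\frac{|\log(f'(t_2))-\log(f'(t_1))|}{|t_2-t_1|^\delta}$. *)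

theory Defs
  imports "HOL-Analysis.Analysis"
begin

abbreviation I01 :: "real set" where "I01 \<equiv> {0..1}"

definition Dv :: "(real \<Rightarrow> real) \<Rightarrow> real \<Rightarrow> real" where
  "Dv f x = vector_derivative f (at x within I01)"

definition is_Ck_on_I :: "nat \<Rightarrow> (real \<Rightarrow> real) \<Rightarrow> bool" where
  "is_Ck_on_I k f \<longleftrightarrow>
     continuous_on I01 f \<and>
     (\<forall>j<k. \<forall>x\<in>I01. (((Dv ^^ j) f) has_vector_derivative (Dv ^^ (Suc j)) f x) (at x within I01)) \<and>
     continuous_on I01 ((Dv ^^ k) f)"

text \<open>C^1 diffeomorphisms of I fixing 0 and 1 (inverse C^1 iff derivative nonvanishing).\<close>
definition Diff1_plus :: "(real \<Rightarrow> real) \<Rightarrow> bool" where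
  "Diff1_plus f \<longleftrightarrow> bij_betw f I01 I01 \<and> f 0 = 0 \<and> f 1 = 1 \<and> is_Ck_on_I 1 f
     \<and> (\<forall>x\<in>I01. Dv f x \<noteq> 0)"

definition Diff1_delta_plus :: "real \<Rightarrow> (real \<Rightarrow> real) \<Rightarrow> bool" where
  "Diff1_delta_plus \<delta> f \<longleftrightarrow> Diff1_plus f \<and>
     (\<exists>K. \<forall>s\<in>I01. \<forall>t\<in>I01. \<bar>Dv f t - Dv f s\<bar> \<le> K * \<bar>t - s\<bar> powr \<delta>)"

definition Diff0_3 :: "(real \<Rightarrow> real) \<Rightarrow> bool" where
  "Diff0_3 f \<longleftrightarrow> Diff1_plus f \<and> is_Ck_on_I 3 f \<and> Dv f 0 = 1 \<and> Dv f 1 = 1"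

definition p_delta :: "real \<Rightarrow> (real \<Rightarrow> real) \<Rightarrow> real" where
  "p_delta \<delta> f = \<bar>ln (Dv f 0)\<bar> +
     (SUP tt \<in> {(t1, t2). t1 \<in> I01 \<and> t2 \<in> I01 \<and> t1 \<noteq> t2}.
        \<bar>ln (Dv f (snd tt)) - ln (Dv f (fst tt))\<bar> / \<bar>snd tt - fst tt\<bar> powr \<delta>)"

definition CI_metric :: "(real \<Rightarrow> real) metric" where
  "CI_metric = cfunspace (top_of_set I01) euclidean_metric"

end

theory Submission imports Defs "HOL-Complex_Analysis.Great_Picard" begin

lemma CI_mcomplete: "mcomplete_of CI_metric"
proof -
  have ms: "Metric_space (UNIV::real set) dist"
    by (simp add: Met_TC.Metric_space_axioms)
  have mc: "Metric_space.mcomplete (UNIV::real set) dist"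
    using complete_UNIV[where 'a=real] by simp
  have "mcomplete_of (cfunspace (top_of_set I01) (Metric_space.Self (UNIV::real set) dist))"
    by (rule Metric_space.mcomplete_cfunspace[OF ms mc])
  moreover have "Metric_space.Self (UNIV::real set) dist = euclidean_metric"
    by (simp add: Metric_space.Self_def[OF ms] euclidean_metric_def)
  ultimately show ?thesis by (simp add: CI_metric_def)
qed

lemma CI_dist_le:
  assumes "f \<in> mspace CI_metric" "g \<in> mspace CI_metric" "0 \<le> B"
    "\<And>x. x \<in> I01 \<Longrightarrow> \<bar>f x - g x\<bar> \<le> B"
  shows "mdist CI_metric f g \<le> B"
  unfolding CI_metric_def
  by (rule mdist_cfunspace_le) (use assms in \<open>auto simp: dist_real_def\<close>)


lemma D1_deriv: "Diff1_plus \<phi> \<Longrightarrow> x \<in> I01 \<Longrightarrow> (\<phi> has_vector_derivative Dv \<phi> x) (at x within I01)"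
  unfolding Diff1_plus_def is_Ck_on_I_def by auto

lemma D1_cont: "Diff1_plus \<phi> \<Longrightarrow> continuous_on I01 (Dv \<phi>)"
  unfolding Diff1_plus_def is_Ck_on_I_def by auto

lemma D1_maps: "Diff1_plus \<phi> \<Longrightarrow> \<phi> ` I01 = I01"
  unfolding Diff1_plus_def by (simp add: bij_betw_imp_surj_on)

lemma mvt01:
  assumes d: "\<forall>x\<in>I01. (F has_vector_derivative F' x) (at x within I01)"
    and ab: "0 \<le> a" "b \<le> 1" "a < b"
  shows "\<exists>\<xi>. a < \<xi> \<and> \<xi> < b \<and> F b - F a = (b - a) * F' \<xi>"
proof -
  have "continuous_on I01 F"
    using d by (auto simp: continuous_on_eq_continuous_within intro: has_vector_derivative_continuous)
  then have cont: "continuous_on {a..b} F"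
    by (rule continuous_on_subset) (use ab in auto)
  have der: "(F has_real_derivative F' x) (at x)" if "a < x" "x < b" for x
  proof -
    have "x \<in> interior I01" using that ab by auto
    then have "at x within I01 = at x" by (rule at_within_interior)
    moreover have "x \<in> I01" using that ab by auto
    then have "(F has_vector_derivative F' x) (at x within I01)" using d by auto
    with \<open>at x within I01 = at x\<close> show ?thesis by (simp add: has_real_derivative_iff_has_vector_derivative)
  qed
  obtain l z where z: "a < z" "z < b" "DERIV F z :> l" "F b - F a = (b - a) * l"
    using MVT[OF ab(3) cont] der real_differentiable_def by blast
  have "l = F' z" using DERIV_unique[OF z(3) der[OF z(1,2)]] .
  then show ?thesis using z by blast
qed

lemma lip_deriv:
  assumes d: "\<forall>x\<in>I01. (F has_vector_derivative F' x) (at x within I01)"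
    and M: "\<forall>x\<in>I01. \<bar>F' x\<bar> \<le> M" and st: "s \<in> I01" "t \<in> I01"
  shows "\<bar>F t - F s\<bar> \<le> M * \<bar>t - s\<bar>"
proof -
  have *: "\<bar>F b - F a\<bar> \<le> M * \<bar>b - a\<bar>" if ab: "a \<in> I01" "b \<in> I01" "a < b" for a b
  proof -
    obtain \<xi> where \<xi>: "a < \<xi>" "\<xi> < b" "F b - F a = (b - a) * F' \<xi>"
      using mvt01[OF d _ _ ab(3)] ab by auto
    have "\<bar>F b - F a\<bar> = \<bar>b - a\<bar> * \<bar>F' \<xi>\<bar>" using \<xi> by (simp add: abs_mult)
    also have "\<dots> \<le> \<bar>b - a\<bar> * M" using M \<xi> that by (intro mult_left_mono) auto
    finally show ?thesis by (simp add: mult.commute)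
  qed
  show ?thesis
    using *[of s t] *[of t s] st by (cases "s < t"; cases "t < s") (auto simp: abs_minus_commute)
qed

lemma lower_deriv:
  assumes d: "\<forall>x\<in>I01. (F has_vector_derivative F' x) (at x within I01)"
    and M: "\<forall>x\<in>I01. m \<le> F' x" and m: "0 \<le> m" and st: "s \<in> I01" "t \<in> I01"
  shows "m * \<bar>t - s\<bar> \<le> \<bar>F t - F s\<bar>"
proof -
  have *: "m * \<bar>b - a\<bar> \<le> \<bar>F b - F a\<bar>" if ab: "a \<in> I01" "b \<in> I01" "a < b" for a b
  proof -
    obtain \<xi> where \<xi>: "a < \<xi>" "\<xi> < b" "F b - F a = (b - a) * F' \<xi>"
      using mvt01[OF d _ _ ab(3)] ab by auto
    have "\<xi> \<in> I01" using \<xi> ab by auto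
    then have "m \<le> \<bar>F' \<xi>\<bar>" using M by force
    then have "m * \<bar>b - a\<bar> \<le> \<bar>b - a\<bar> * \<bar>F' \<xi>\<bar>"
      by (subst mult.commute, intro mult_left_mono) auto
    also have "\<dots> = \<bar>F b - F a\<bar>" using \<xi> by (simp add: abs_mult)
    finally show ?thesis .
  qed
  show ?thesis
    using *[of s t] *[of t s] st by (cases "s < t"; cases "t < s") (auto simp: abs_minus_commute)
qed

lemma pos_deriv:
  assumes D: "Diff1_plus \<phi>" and x: "x \<in> I01"
  shows "Dv \<phi> x > 0"
proof (rule ccontr)
  assume "\<not> Dv \<phi> x > 0"
  moreover have "Dv \<phi> x \<noteq> 0" using D x unfolding Diff1_plus_def by auto
  ultimately have neg: "Dv \<phi> x < 0" by linarith
  obtain \<xi> where \<xi>: "0 < \<xi>" "\<xi> < 1" "\<phi> 1 - \<phi> 0 = (1 - 0) * Dv \<phi> \<xi>"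
    using mvt01[of \<phi> "Dv \<phi>" 0 1] D1_deriv[OF D] by auto
  have "Dv \<phi> \<xi> = 1" using \<xi> D unfolding Diff1_plus_def by simp
  have cont: "continuous_on I01 (Dv \<phi>)" by (rule D1_cont[OF D])
  have nz: "\<And>y. y \<in> I01 \<Longrightarrow> Dv \<phi> y \<noteq> 0" using D unfolding Diff1_plus_def by auto
  show False
  proof (cases "x \<le> \<xi>")
    case True
    have "continuous_on {x..\<xi>} (Dv \<phi>)" by (rule continuous_on_subset[OF cont]) (use x \<xi> in auto)
    then obtain y where "x \<le> y" "y \<le> \<xi>" "Dv \<phi> y = 0"
      using IVT'[of "Dv \<phi>" x 0 \<xi>] neg \<open>Dv \<phi> \<xi> = 1\<close> True by auto
    then show False using nz[of y] x \<xi> by auto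
  next
    case False
    have "continuous_on {\<xi>..x} (Dv \<phi>)" by (rule continuous_on_subset[OF cont]) (use x \<xi> in auto)
    then obtain y where "\<xi> \<le> y" "y \<le> x" "Dv \<phi> y = 0"
      using IVT2'[of "Dv \<phi>" x 0 \<xi>] neg \<open>Dv \<phi> \<xi> = 1\<close> False by auto
    then show False using nz[of y] x \<xi> by auto
  qed
qed

lemma Dv_comp:
  assumes f: "Diff1_plus f" and g: "Diff1_plus g" and x: "x \<in> I01"
  shows "Dv (g \<circ> f) x = Dv g (f x) * Dv f x"
proof -
  have "f x \<in> I01" using D1_maps[OF f] x by auto
  then have "(g has_vector_derivative Dv g (f x)) (at (f x) within f ` I01)"
    using D1_deriv[OF g] D1_maps[OF f] by simp
  from vector_diff_chain_within[OF D1_deriv[OF f x] this]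
  have "((g \<circ> f) has_vector_derivative Dv g (f x) * Dv f x) (at x within I01)"
    by (simp add: mult.commute)
  then show ?thesis
    unfolding Dv_def using x by (intro vector_derivative_within_closed_interval) auto
qed

lemma bnd_cont: "continuous_on I01 (\<phi>::real\<Rightarrow>real) \<Longrightarrow> \<exists>M. \<forall>x\<in>I01. \<bar>\<phi> x\<bar> \<le> M"
proof -
  assume "continuous_on I01 \<phi>"
  then have "compact (\<phi> ` I01)" by (intro compact_continuous_image) auto
  then have "bounded (\<phi> ` I01)" by (rule compact_imp_bounded)
  then show ?thesis by (auto simp: bounded_real)
qed

lemma min_cont:
  assumes "continuous_on I01 (\<phi>::real\<Rightarrow>real)" "\<forall>x\<in>I01. \<phi> x > 0"
  shows "\<exists>m>0. \<forall>x\<in>I01. m \<le> \<phi> x"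
proof -
  obtain x where "x \<in> I01" "\<forall>y\<in>I01. \<phi> x \<le> \<phi> y"
    using continuous_attains_inf[of I01 \<phi>] assms by auto
  then show ?thesis using assms by blast
qed

lemma ln_lip1:
  assumes "0 < m" "m \<le> a" "m \<le> b"
  shows "ln a - ln b \<le> \<bar>a - b\<bar> / (m::real)"
proof -
  have "ln a - ln b = ln (a / b)" using assms by (simp add: ln_div)
  also have "\<dots> \<le> a / b - 1" using assms by (intro ln_le_minus_one) auto
  also have "\<dots> = (a - b) / b" using assms by (simp add: field_simps)
  also have "\<dots> \<le> \<bar>a - b\<bar> / m"
  proof (cases "a \<ge> b")
    case True
    then show ?thesis using assms by (simp add: frac_le)
  next
    case False
    then have "(a - b) / b \<le> 0" using assms by (simp add: divide_nonpos_pos)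
    also have "0 \<le> \<bar>a - b\<bar> / m" using assms by simp
    finally show ?thesis .
  qed
  finally show ?thesis .
qed

lemma ln_lip:
  assumes "0 < m" "m \<le> a" "m \<le> b"
  shows "\<bar>ln a - ln b\<bar> \<le> \<bar>a - b\<bar> / (m::real)"
  using ln_lip1[OF assms] ln_lip1[of m b a] assms by (auto simp: abs_minus_commute)

lemma le_powr_self:
  assumes "0 \<le> x" "x \<le> 1" "0 < d" "d \<le> (1::real)"
  shows "x \<le> x powr d"
proof (cases "x = 0")
  case False
  then have "x powr 1 \<le> x powr d" using assms by (intro powr_mono') auto
  then show ?thesis using assms False by simp
qed simp

lemma in_CI:
  assumes "continuous_on I01 h"
  shows "restrict h I01 \<in> mspace CI_metric"
proof -
  have "continuous_on I01 (restrict h I01)"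
    by (rule continuous_on_eq[OF assms]) auto
  then show ?thesis
    unfolding CI_metric_def
    by (subst compactin_mspace_cfunspace) (auto simp: compactin_subtopology)
qed

lemma tri3: "\<bar>a - c\<bar> < e/3 \<Longrightarrow> \<bar>b - c\<bar> < e/3 \<Longrightarrow> \<bar>a - b\<bar> \<le> 2*e/(3::real)"
  unfolding abs_less_iff abs_le_iff by linarith

lemma tb_CI:
  assumes d: "0 < \<delta>" and S: "S \<subseteq> mspace CI_metric"
    and bnd: "\<And>h x. h \<in> S \<Longrightarrow> x \<in> I01 \<Longrightarrow> \<bar>h x\<bar> \<le> B"
    and hol: "\<And>h x y. h \<in> S \<Longrightarrow> x \<in> I01 \<Longrightarrow> y \<in> I01 \<Longrightarrow> \<bar>h x - h y\<bar> \<le> K * \<bar>x - y\<bar> powr \<delta>"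
  shows "Metric_space.mtotally_bounded (mspace CI_metric) (mdist CI_metric) S"
  unfolding Metric_space.mtotally_bounded_sequentially[OF Metric_space_mspace_mdist]
proof (intro conjI allI impI)
  show "S \<subseteq> mspace CI_metric" by fact
  fix \<sigma> :: "nat \<Rightarrow> real \<Rightarrow> real"
  assume r: "range \<sigma> \<subseteq> S"
  define K1 where "K1 = max K 0 + 1"
  have K1: "K1 > 0" "K \<le> K1" by (auto simp: K1_def)
  obtain g k where kk: "strict_mono (k :: nat \<Rightarrow> nat)"
     and conv: "\<And>e. 0 < e \<Longrightarrow> \<exists>N. \<forall>n x. n \<ge> N \<and> x \<in> I01 \<longrightarrow> norm(\<sigma> (k n) x - g x) < e"
  proof (rule Arzela_Ascoli[of I01 \<sigma> B])
    show "compact I01" by simp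
    show "norm (\<sigma> n x) \<le> B" if "x \<in> I01" for n x
      using bnd[of "\<sigma> n" x] r that by auto
    show "\<exists>d>0. \<forall>n y. y \<in> I01 \<and> norm (x - y) < d \<longrightarrow> norm (\<sigma> n x - \<sigma> n y) < e"
      if "x \<in> I01" "0 < e" for x e
    proof (intro exI conjI allI impI)
      define d where "d = (e / K1) powr (1/\<delta>)"
      show "d > 0" using K1 that d by (simp add: d_def)
      fix n y assume y: "y \<in> I01 \<and> norm (x - y) < d"
      have "\<bar>x - y\<bar> powr \<delta> < d powr \<delta>"
        using y d by (intro powr_less_mono2) auto
      also have "d powr \<delta> = e / K1"
        using d K1 that by (simp add: d_def powr_powr)
      finally have lt: "\<bar>x - y\<bar> powr \<delta> < e / K1" .
      have "\<bar>\<sigma> n x - \<sigma> n y\<bar> \<le> K * \<bar>x - y\<bar> powr \<delta>"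
        using hol[of "\<sigma> n" x y] r that y by auto
      also have "\<dots> \<le> K1 * \<bar>x - y\<bar> powr \<delta>"
        using K1 by (intro mult_right_mono) auto
      also have "\<dots> < K1 * (e / K1)"
        using K1 lt by (intro mult_strict_left_mono) auto
      also have "\<dots> = e" using K1 by simp
      finally show "norm (\<sigma> n x - \<sigma> n y) < e" by simp
    qed
  qed blast
  show "\<exists>r. strict_mono r \<and> Metric_space.MCauchy (mspace CI_metric) (mdist CI_metric) (\<sigma> \<circ> r)"
  proof (intro exI conjI)
    show "strict_mono k" by fact
    show "Metric_space.MCauchy (mspace CI_metric) (mdist CI_metric) (\<sigma> \<circ> k)"
      unfolding Metric_space.MCauchy_def[OF Metric_space_mspace_mdist]
    proof (intro conjI allI impI)
      show "range (\<sigma> \<circ> k) \<subseteq> mspace CI_metric" using r S by auto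
      fix e :: real assume e: "e > 0"
      then obtain N where N: "\<And>n x. n \<ge> N \<Longrightarrow> x \<in> I01 \<Longrightarrow> norm(\<sigma> (k n) x - g x) < e/3"
        using conv[of "e/3"] by auto
      show "\<exists>N. \<forall>n n'. N \<le> n \<longrightarrow> N \<le> n' \<longrightarrow> mdist CI_metric ((\<sigma> \<circ> k) n) ((\<sigma> \<circ> k) n') < e"
      proof (intro exI allI impI)
        fix n n' assume nn: "N \<le> n" "N \<le> n'"
        have "mdist CI_metric ((\<sigma> \<circ> k) n) ((\<sigma> \<circ> k) n') \<le> 2*e/3"
        proof (rule CI_dist_le)
          show "(\<sigma> \<circ> k) n \<in> mspace CI_metric" "(\<sigma> \<circ> k) n' \<in> mspace CI_metric" using r S by auto
          show "0 \<le> 2*e/3" using e by simp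
          fix x assume x: "x \<in> I01"
          show "\<bar>(\<sigma> \<circ> k) n x - (\<sigma> \<circ> k) n' x\<bar> \<le> 2*e/3"
            using N[OF nn(1) x] N[OF nn(2) x] unfolding comp_def real_norm_def by (rule tri3)
        qed
        then show "mdist CI_metric ((\<sigma> \<circ> k) n) ((\<sigma> \<circ> k) n') < e" using e by simp
      qed
    qed
  qed
qed

lemma compact_closure_CI:
  assumes "Metric_space.mtotally_bounded (mspace CI_metric) (mdist CI_metric) S"
  shows "compactin (mtopology_of CI_metric) (mtopology_of CI_metric closure_of S)"
  using Metric_space.mtotally_bounded_eq_compact_closure_of[OF Metric_space_mspace_mdist,
      where S=S] CI_mcomplete assms
  by (simp add: mcomplete_of_def mtopology_of_def)


lemma key:
  assumes d: "0 < \<delta>" "\<delta> \<le> 1" and fD: "Diff1_plus f"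
    and mf: "mf > 0" "\<forall>x\<in>I01. mf \<le> Dv f x"
    and Mf: "\<forall>x\<in>I01. \<bar>Dv f x\<bar> \<le> Mf"
    and lnf: "\<forall>s\<in>I01. \<forall>t\<in>I01. \<bar>ln (Dv f t) - ln (Dv f s)\<bar> \<le> Kl * \<bar>t - s\<bar> powr \<delta>"
    and Kl: "Kl \<ge> 0" and C: "C > 0"
    and g: "Diff0_3 g" and p: "p_delta \<delta> (g \<circ> f) \<le> C"
  shows "\<forall>x\<in>I01. \<forall>y\<in>I01. \<bar>ln (Dv g x) - ln (Dv g y)\<bar> \<le> (C + Kl) / mf powr \<delta> * \<bar>x - y\<bar> powr \<delta>"
proof -
  have gD: "Diff1_plus g" and g3: "is_Ck_on_I 3 g" using g unfolding Diff0_3_def by auto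
  have gpos: "\<And>x. x \<in> I01 \<Longrightarrow> Dv g x > 0" by (rule pos_deriv[OF gD])
  have fpos: "\<And>x. x \<in> I01 \<Longrightarrow> Dv f x > 0" by (rule pos_deriv[OF fD])
  have fI: "\<And>t. t \<in> I01 \<Longrightarrow> f t \<in> I01" using D1_maps[OF fD] by auto
  have lnD: "ln (Dv (g \<circ> f) t) = ln (Dv g (f t)) + ln (Dv f t)" if "t \<in> I01" for t
    using Dv_comp[OF fD gD that] gpos[OF fI[OF that]] fpos[OF that] by (simp add: ln_mult)
  have g3d: "\<forall>j<3. \<forall>x\<in>I01. (((Dv ^^ j) g) has_vector_derivative (Dv ^^ (Suc j)) g x) (at x within I01)"
    using g3 unfolding is_Ck_on_I_def by blast
  have d2: "\<forall>x\<in>I01. (Dv g has_vector_derivative (Dv ^^ Suc 1) g x) (at x within I01)"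
  proof
    fix x assume "x \<in> I01"
    have "(1::nat) < 3" by simp
    with \<open>x \<in> I01\<close> have "(((Dv ^^ 1) g) has_vector_derivative (Dv ^^ (Suc 1)) g x) (at x within I01)"
      using g3d \<open>(1::nat) < 3\<close> by blast
    then show "(Dv g has_vector_derivative (Dv ^^ Suc 1) g x) (at x within I01)" by simp
  qed
  have cont2: "continuous_on I01 ((Dv ^^ Suc 1) g)"
  proof -
    have "Suc 1 < 3" by simp
    have "\<forall>x\<in>I01. (((Dv ^^ Suc 1) g) has_vector_derivative (Dv ^^ (Suc (Suc 1))) g x) (at x within I01)"
      using g3d \<open>Suc 1 < 3\<close> by blast
    then show ?thesis
      by (auto simp: continuous_on_eq_continuous_within intro: has_vector_derivative_continuous)
  qed
  obtain M2 where M2: "\<forall>x\<in>I01. \<bar>(Dv ^^ Suc 1) g x\<bar> \<le> M2" using bnd_cont[OF cont2] by blast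
  have M2nn: "M2 \<ge> 0" using M2 by (meson abs_ge_zero atLeastAtMost_iff order_trans zero_le_one order_refl)
  obtain mg where mg: "mg > 0" "\<forall>x\<in>I01. mg \<le> Dv g x"
    using min_cont[OF D1_cont[OF gD]] gpos by blast
  have lnDg: "\<bar>ln (Dv g b) - ln (Dv g a)\<bar> \<le> M2 / mg * \<bar>b - a\<bar>" if "a \<in> I01" "b \<in> I01" for a b
  proof -
    have "\<bar>ln (Dv g b) - ln (Dv g a)\<bar> \<le> \<bar>Dv g b - Dv g a\<bar> / mg"
      using mg that by (intro ln_lip) auto
    also have "\<dots> \<le> M2 * \<bar>b - a\<bar> / mg"
      using lip_deriv[OF d2 M2 that] mg by (intro divide_right_mono) auto
    finally show ?thesis by simp
  qed
  have Mfnn: "Mf \<ge> 0" using Mf by (meson abs_ge_zero atLeastAtMost_iff order_trans zero_le_one order_refl)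
  have flip: "\<bar>f t - f s\<bar> \<le> Mf * \<bar>t - s\<bar>" if "s \<in> I01" "t \<in> I01" for s t
    using lip_deriv[of f "Dv f" Mf s t] D1_deriv[OF fD] Mf that by auto
  define Lg where "Lg = M2 / mg * Mf + Kl"
  have holD: "\<bar>ln (Dv (g \<circ> f) t) - ln (Dv (g \<circ> f) s)\<bar> \<le> Lg * \<bar>t - s\<bar> powr \<delta>"
    if st: "s \<in> I01" "t \<in> I01" for s t
  proof -
    have "\<bar>t - s\<bar> \<le> \<bar>t - s\<bar> powr \<delta>" using st d by (intro le_powr_self) auto
    have c1: "M2 / mg \<ge> 0" using M2nn mg by simp
    have "\<bar>ln (Dv (g \<circ> f) t) - ln (Dv (g \<circ> f) s)\<bar>
        = \<bar>(ln (Dv g (f t)) - ln (Dv g (f s))) + (ln (Dv f t) - ln (Dv f s))\<bar>"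
      using lnD st by simp
    also have "\<dots> \<le> \<bar>ln (Dv g (f t)) - ln (Dv g (f s))\<bar> + \<bar>ln (Dv f t) - ln (Dv f s)\<bar>"
      by (rule abs_triangle_ineq)
    also have "\<dots> \<le> M2 / mg * \<bar>f t - f s\<bar> + Kl * \<bar>t - s\<bar> powr \<delta>"
      using lnDg[OF fI fI, OF st(1) st(2)] lnf st by (intro add_mono) auto
    also have "\<dots> \<le> M2 / mg * (Mf * \<bar>t - s\<bar> powr \<delta>) + Kl * \<bar>t - s\<bar> powr \<delta>"
    proof -
      have "\<bar>f t - f s\<bar> \<le> Mf * \<bar>t - s\<bar> powr \<delta>"
        using flip[OF st] \<open>\<bar>t - s\<bar> \<le> \<bar>t - s\<bar> powr \<delta>\<close> Mfnn
        by (meson mult_left_mono order_trans)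
      then show ?thesis using c1 Kl by (intro add_mono mult_left_mono) auto
    qed
    also have "\<dots> = Lg * \<bar>t - s\<bar> powr \<delta>" by (simp add: Lg_def algebra_simps)
    finally show ?thesis .
  qed
  define P where "P = {(t1, t2). t1 \<in> I01 \<and> t2 \<in> I01 \<and> t1 \<noteq> t2}"
  define R where "R = (\<lambda>tt. \<bar>ln (Dv (g \<circ> f) (snd tt)) - ln (Dv (g \<circ> f) (fst tt))\<bar> / \<bar>snd tt - fst tt\<bar> powr \<delta>)"
  have Rle: "R tt \<le> Lg" if tt: "tt \<in> P" for tt
  proof -
    obtain a b where ab: "tt = (a, b)" "a \<in> I01" "b \<in> I01" "a \<noteq> b" using tt by (auto simp: P_def)
    have pos: "\<bar>b - a\<bar> powr \<delta> > 0" using ab by simp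
    show ?thesis using holD[OF ab(2,3)] pos ab(1) by (simp add: R_def pos_divide_le_eq)
  qed
  have bdd: "bdd_above (R ` P)" using Rle by (intro bdd_above.I2) auto
  have supC: "(SUP tt\<in>P. R tt) \<le> C"
    using p unfolding p_delta_def P_def[symmetric] R_def[symmetric] by simp
  have holC: "\<bar>ln (Dv (g \<circ> f) t) - ln (Dv (g \<circ> f) s)\<bar> \<le> C * \<bar>t - s\<bar> powr \<delta>"
    if st: "s \<in> I01" "t \<in> I01" for s t
  proof (cases "s = t")
    case False
    then have "(s, t) \<in> P" using st by (simp add: P_def)
    then have "R (s, t) \<le> C" using cSUP_upper[OF _ bdd] supC by (meson order_trans)
    moreover have "\<bar>t - s\<bar> powr \<delta> > 0" using False by simp
    ultimately show ?thesis by (simp add: R_def pos_divide_le_eq)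
  qed simp
  have phi: "\<bar>ln (Dv g (f t)) - ln (Dv g (f s))\<bar> \<le> (C + Kl) * \<bar>t - s\<bar> powr \<delta>"
    if st: "s \<in> I01" "t \<in> I01" for s t
  proof -
    have "\<bar>ln (Dv g (f t)) - ln (Dv g (f s))\<bar>
        = \<bar>(ln (Dv (g \<circ> f) t) - ln (Dv (g \<circ> f) s)) - (ln (Dv f t) - ln (Dv f s))\<bar>"
      using lnD st by simp
    also have "\<dots> \<le> \<bar>ln (Dv (g \<circ> f) t) - ln (Dv (g \<circ> f) s)\<bar> + \<bar>ln (Dv f t) - ln (Dv f s)\<bar>"
      by (rule abs_triangle_ineq4)
    also have "\<dots> \<le> C * \<bar>t - s\<bar> powr \<delta> + Kl * \<bar>t - s\<bar> powr \<delta>"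
      using holC[OF st] lnf st by (intro add_mono) auto
    finally show ?thesis by (simp add: algebra_simps)
  qed
  show ?thesis
  proof (intro ballI)
    fix x y assume xy: "x \<in> I01" "y \<in> I01"
    obtain u where u: "u \<in> I01" "f u = x" using D1_maps[OF fD] xy by (metis imageE)
    obtain v where v: "v \<in> I01" "f v = y" using D1_maps[OF fD] xy by (metis imageE)
    have "mf * \<bar>u - v\<bar> \<le> \<bar>f u - f v\<bar>"
      using lower_deriv[of f "Dv f" mf v u] D1_deriv[OF fD] mf u v by auto
    then have uv: "\<bar>u - v\<bar> \<le> \<bar>x - y\<bar> / mf" using mf u v by (simp add: pos_le_divide_eq mult.commute)
    have "\<bar>u - v\<bar> powr \<delta> \<le> (\<bar>x - y\<bar> / mf) powr \<delta>" using uv d by (intro powr_mono2) auto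
    also have "\<dots> = \<bar>x - y\<bar> powr \<delta> / mf powr \<delta>" using mf by (simp add: powr_divide)
    finally have uv2: "\<bar>u - v\<bar> powr \<delta> \<le> \<bar>x - y\<bar> powr \<delta> / mf powr \<delta>" .
    have "\<bar>ln (Dv g x) - ln (Dv g y)\<bar> \<le> (C + Kl) * \<bar>u - v\<bar> powr \<delta>"
      using phi[OF v(1) u(1)] u v by simp
    also have "\<dots> \<le> (C + Kl) * (\<bar>x - y\<bar> powr \<delta> / mf powr \<delta>)"
      using uv2 C Kl by (intro mult_left_mono) auto
    finally show "\<bar>ln (Dv g x) - ln (Dv g y)\<bar> \<le> (C + Kl) / mf powr \<delta> * \<bar>x - y\<bar> powr \<delta>"
      by simp
  qed
qed

theorem mainTheorem14:
  fixes \<delta> :: real and f :: "real \<Rightarrow> real" and G :: "(real \<Rightarrow> real) set"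
  assumes "0 < \<delta>" and "\<delta> < 1/2"
    and "Diff1_delta_plus \<delta> f"
    and "\<forall>g\<in>G. Diff0_3 g"
  shows "\<forall>C>0. compactin (mtopology_of CI_metric)
           (mtopology_of CI_metric closure_of
              {restrict (\<lambda>x. ln (Dv g x)) I01 | g. g \<in> G \<and> p_delta \<delta> (g \<circ> f) \<le> C})"
  proof (intro allI impI)
  fix C :: real assume C: "C > 0"
  have fD: "Diff1_plus f" and "\<exists>K. \<forall>s\<in>I01. \<forall>t\<in>I01. \<bar>Dv f t - Dv f s\<bar> \<le> K * \<bar>t - s\<bar> powr \<delta>"
    using assms(3) unfolding Diff1_delta_plus_def by auto
  then obtain Kf where Kf: "\<forall>s\<in>I01. \<forall>t\<in>I01. \<bar>Dv f t - Dv f s\<bar> \<le> Kf * \<bar>t - s\<bar> powr \<delta>" by blast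
  have Kfnn: "Kf \<ge> 0"
  proof -
    have "\<bar>Dv f 1 - Dv f 0\<bar> \<le> Kf * \<bar>1 - 0\<bar> powr \<delta>" using Kf by (meson atLeastAtMost_iff order_refl zero_le_one)
    then show ?thesis by simp
  qed
  obtain mf where mf: "mf > 0" "\<forall>x\<in>I01. mf \<le> Dv f x"
    using min_cont[OF D1_cont[OF fD]] pos_deriv[OF fD] by blast
  obtain Mf where Mf: "\<forall>x\<in>I01. \<bar>Dv f x\<bar> \<le> Mf" using bnd_cont[OF D1_cont[OF fD]] by blast
  define Kl where "Kl = Kf / mf"
  have Kl: "Kl \<ge> 0" using Kfnn mf by (simp add: Kl_def)
  have lnf: "\<forall>s\<in>I01. \<forall>t\<in>I01. \<bar>ln (Dv f t) - ln (Dv f s)\<bar> \<le> Kl * \<bar>t - s\<bar> powr \<delta>"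
  proof (intro ballI)
    fix s t assume st: "s \<in> I01" "t \<in> I01"
    have "\<bar>ln (Dv f t) - ln (Dv f s)\<bar> \<le> \<bar>Dv f t - Dv f s\<bar> / mf"
      using mf st by (intro ln_lip) auto
    also have "\<dots> \<le> Kf * \<bar>t - s\<bar> powr \<delta> / mf"
      using Kf st mf by (intro divide_right_mono) auto
    finally show "\<bar>ln (Dv f t) - ln (Dv f s)\<bar> \<le> Kl * \<bar>t - s\<bar> powr \<delta>" by (simp add: Kl_def)
  qed
  define K' where "K' = (C + Kl) / mf powr \<delta>"
  define S where "S = {restrict (\<lambda>x. ln (Dv g x)) I01 | g. g \<in> G \<and> p_delta \<delta> (g \<circ> f) \<le> C}"
  have hol: "\<forall>x\<in>I01. \<forall>y\<in>I01. \<bar>ln (Dv g x) - ln (Dv g y)\<bar> \<le> K' * \<bar>x - y\<bar> powr \<delta>"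
    if "g \<in> G" "p_delta \<delta> (g \<circ> f) \<le> C" for g
    unfolding K'_def using key[OF assms(1) _ fD mf Mf lnf Kl C _ that(2)] assms(2,4) that(1) by auto
  have S1: "S \<subseteq> mspace CI_metric"
  proof
    fix h assume "h \<in> S"
    then obtain g where g: "h = restrict (\<lambda>x. ln (Dv g x)) I01" "g \<in> G" by (auto simp: S_def)
    have gD: "Diff1_plus g" using assms(4) g(2) unfolding Diff0_3_def by auto
    have "continuous_on I01 (\<lambda>x. ln (Dv g x))"
      using D1_cont[OF gD] pos_deriv[OF gD] by (intro continuous_on_ln) (auto, fastforce)
    then show "h \<in> mspace CI_metric" using g(1) in_CI by simp
  qed
  have S2: "\<bar>h x - h y\<bar> \<le> K' * \<bar>x - y\<bar> powr \<delta>" if hh: "h \<in> S" "x \<in> I01" "y \<in> I01" for h x y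
  proof -
    obtain g where g: "h = restrict (\<lambda>x. ln (Dv g x)) I01" "g \<in> G" "p_delta \<delta> (g \<circ> f) \<le> C"
      using hh(1) by (auto simp: S_def)
    show ?thesis using hol[OF g(2,3)] hh(2,3) g(1) by simp
  qed
  have S3: "\<bar>h x\<bar> \<le> \<bar>K'\<bar>" if hh: "h \<in> S" "x \<in> I01" for h x
  proof -
    obtain g where g: "h = restrict (\<lambda>x. ln (Dv g x)) I01" "g \<in> G"
      using hh(1) by (auto simp: S_def)
    have "Dv g 0 = 1" using assms(4) g(2) unfolding Diff0_3_def by auto
    then have h0: "h 0 = 0" using g(1) by simp
    have "\<bar>h x\<bar> = \<bar>h x - h 0\<bar>" using h0 by simp
    also have "\<dots> \<le> K' * \<bar>x - 0\<bar> powr \<delta>" using S2[OF hh(1) hh(2), of 0] by simp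
    also have "\<dots> \<le> \<bar>K'\<bar> * \<bar>x - 0\<bar> powr \<delta>" by (intro mult_right_mono) auto
    also have "\<dots> \<le> \<bar>K'\<bar> * 1" using hh(2) assms(1) by (intro mult_left_mono powr_le1) auto
    finally show ?thesis by simp
  qed
  have "Metric_space.mtotally_bounded (mspace CI_metric) (mdist CI_metric) S"
    using tb_CI[of \<delta> S "\<bar>K'\<bar>" K'] assms(1) S1 S3 S2 by blast
  from compact_closure_CI[OF this]
  show "compactin (mtopology_of CI_metric)
           (mtopology_of CI_metric closure_of
              {restrict (\<lambda>x. ln (Dv g x)) I01 | g. g \<in> G \<and> p_delta \<delta> (g \<circ> f) \<le> C})"
    by (simp add: S_def)
qed

end
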